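(* Let $\kappa$ be a cardinal (finite or infinite), let $\mathbb{F}$ be a field, and let $V$ be the vector space over $\mathbb{F}$ presented by generators $x_\alpha, y_\alpha, z_\alpha$ ($\alpha\in\kappa$) subject to the relations $x_\alpha+y_\alpha+z_\alpha=0$ ($\alpha\in\kappa$). Define $F\colon \mathcal{P}(\kappa)^3\to \mathrm{Sub}(V)$ by $F(A,B,C)=\mathrm{Span}\{x_\alpha:\alpha\in A\}+\mathrm{Span}\{y_\beta:\beta\in B\}+\mathrm{Span}\{z_\gamma:\gamma\in C\}$. Then the restriction of $F$ to $M_3[\mathcal{P}(\kappa)]$ is a bounded lattice embedding $M_3[\mathcal{P}(\kappa)]\to\mathrm{Sub}(V)$. Consequently, when $\kappa$ is infinite, the restriction of $F$ to the lattice $S$ is a bounded lattice embedding $S\to \mathrm{Sub}(V)$; in particular $S$ is isomorphic to a bounded sublattice of the lattice of all subspaces of a vector space.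
   Context: $\mathcal{P}(\kappa)$ is the Boolean lattice of all subsets of $\kappa$ and $\mathrm{Sub}(V)$ is the lattice of all subspaces of $V$ (join is the sum of subspaces, meet is intersection). For a distributive lattice $L$, a triple $(a,b,c)\in L^3$ is balanced if $a\wedge b=a\wedge c=b\wedge c$; $M_3[L]$ denotes the set of balanced triples, which is a lattice with componentwise meet and with join $(a,b,c)\vee(a',b',c')=\overline{(a\vee a',b\vee b',c\vee c')}$, where for $(a,b,c)\in L^3$ one sets $\mu(a,b,c)=(a\wedge b)\vee(a\wedge c)\vee(b\wedge c)$ and $\overline{(a,b,c)}=(a\vee\mu(a,b,c),\,b\vee\mu(a,b,c),\,c\vee\mu(a,b,c))$. For infinite $\kappa$: $\mathcal{F}(\kappa)$ is the set of subsets $X\subseteq\kappa$ that are finite or have finite complement $\kappa\setminus X$ (a Boolean sublattice of $\mathcal{P}(\kappa)$); $T=\{(A,B,C)\in\mathcal{F}(\kappa)^3 : C\setminus \mu(A,B,C)\text{ is finite}\}$, where $\mu(A,B,C)=(A\cap B)\cup(A\cap C)\cup(B\cap C)$; and $S=T\cap M_3[\mathcal{F}(\kappa)]$, ordered componentwise (a bounded sublattice of $M_3[\mathcal{F}(\kappa)]$, itself a sublattice of $M_3[\mathcal{P}(\kappa)]$). *)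

theory Defs
  imports Main HOL.Modules "HOL-Library.Function_Algebras"
begin

text \<open>Concrete model of V: the relations x_a + y_a + z_a = 0 let us eliminate z_a = - x_a - y_a,
  so V is the free F-vector space on the basis x_a, y_a (a in K).  Vectors are finitely supported
  functions K x bool -> F; (a,True) is the coordinate of x_a and (a,False) that of y_a.\<close>

type_synonym ('a, 'f) vec = "'a \<times> bool \<Rightarrow> 'f"

definition vscale :: "'f::field \<Rightarrow> ('a, 'f) vec \<Rightarrow> ('a, 'f) vec" where
  "vscale c v = (\<lambda>i. c * v i)"

definition Vsp :: "'a set \<Rightarrow> ('a, 'f::field) vec set" where
  "Vsp K = {v. finite {i. v i \<noteq> 0} \<and> (\<forall>i. v i \<noteq> 0 \<longrightarrow> fst i \<in> K)}"

definition xg :: "'a \<Rightarrow> ('a, 'f::field) vec" where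
  "xg a = (\<lambda>i. if i = (a, True) then 1 else 0)"

definition yg :: "'a \<Rightarrow> ('a, 'f::field) vec" where
  "yg a = (\<lambda>i. if i = (a, False) then 1 else 0)"

definition zg :: "'a \<Rightarrow> ('a, 'f::field) vec" where
  "zg a = - xg a - yg a"

definition vspan :: "('a, 'f::field) vec set \<Rightarrow> ('a, 'f) vec set" where
  "vspan S = module.span vscale S"

definition SubV :: "'a set \<Rightarrow> ('a, 'f::field) vec set set" where
  "SubV K = {W. W \<subseteq> Vsp K \<and> module.subspace vscale W}"

definition ssum :: "('a, 'f::field) vec set \<Rightarrow> ('a, 'f) vec set \<Rightarrow> ('a, 'f) vec set" where
  "ssum U W = {u + w | u w. u \<in> U \<and> w \<in> W}"

definition Fmap :: "'a set \<times> 'a set \<times> 'a set \<Rightarrow> ('a, 'f::field) vec set" where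
  "Fmap t = (case t of (A, B, C) \<Rightarrow>
     ssum (ssum (vspan (xg ` A)) (vspan (yg ` B))) (vspan (zg ` C)))"

definition mu3 :: "'a set \<times> 'a set \<times> 'a set \<Rightarrow> 'a set" where
  "mu3 t = (case t of (a, b, c) \<Rightarrow> (a \<inter> b) \<union> (a \<inter> c) \<union> (b \<inter> c))"

definition balanced :: "'a set \<times> 'a set \<times> 'a set \<Rightarrow> bool" where
  "balanced t = (case t of (a, b, c) \<Rightarrow> a \<inter> b = a \<inter> c \<and> a \<inter> c = b \<inter> c)"

definition bclosure :: "'a set \<times> 'a set \<times> 'a set \<Rightarrow> 'a set \<times> 'a set \<times> 'a set" where
  "bclosure t = (case t of (a, b, c) \<Rightarrow> (a \<union> mu3 t, b \<union> mu3 t, c \<union> mu3 t))"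

definition M3P :: "'a set \<Rightarrow> ('a set \<times> 'a set \<times> 'a set) set" where
  "M3P K = {(a, b, c). a \<subseteq> K \<and> b \<subseteq> K \<and> c \<subseteq> K \<and> balanced (a, b, c)}"

definition m3meet :: "'a set \<times> 'a set \<times> 'a set \<Rightarrow> 'a set \<times> 'a set \<times> 'a set \<Rightarrow> 'a set \<times> 'a set \<times> 'a set" where
  "m3meet s t = (case s of (a, b, c) \<Rightarrow> case t of (a', b', c') \<Rightarrow> (a \<inter> a', b \<inter> b', c \<inter> c'))"

definition m3join :: "'a set \<times> 'a set \<times> 'a set \<Rightarrow> 'a set \<times> 'a set \<times> 'a set \<Rightarrow> 'a set \<times> 'a set \<times> 'a set" where
  "m3join s t = (case s of (a, b, c) \<Rightarrow> case t of (a', b', c') \<Rightarrow> bclosure (a \<union> a', b \<union> b', c \<union> c'))"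

definition FinCof :: "'a set \<Rightarrow> 'a set set" where
  "FinCof K = {X. X \<subseteq> K \<and> (finite X \<or> finite (K - X))}"

definition Tset :: "'a set \<Rightarrow> ('a set \<times> 'a set \<times> 'a set) set" where
  "Tset K = {(A, B, C). A \<in> FinCof K \<and> B \<in> FinCof K \<and> C \<in> FinCof K \<and> finite (C - mu3 (A, B, C))}"

definition M3F :: "'a set \<Rightarrow> ('a set \<times> 'a set \<times> 'a set) set" where
  "M3F K = {(a, b, c). a \<in> FinCof K \<and> b \<in> FinCof K \<and> c \<in> FinCof K \<and> balanced (a, b, c)}"

definition Sset :: "'a set \<Rightarrow> ('a set \<times> 'a set \<times> 'a set) set" where
  "Sset K = Tset K \<inter> M3F K"

definition bounded_lattice_embedding ::
  "'x set \<Rightarrow> ('x \<Rightarrow> 'x \<Rightarrow> 'x) \<Rightarrow> ('x \<Rightarrow> 'x \<Rightarrow> 'x) \<Rightarrow> 'x \<Rightarrow> 'x \<Rightarrow>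
   'y set \<Rightarrow> ('y \<Rightarrow> 'y \<Rightarrow> 'y) \<Rightarrow> ('y \<Rightarrow> 'y \<Rightarrow> 'y) \<Rightarrow> 'y \<Rightarrow> 'y \<Rightarrow> ('x \<Rightarrow> 'y) \<Rightarrow> bool" where
  "bounded_lattice_embedding L meetL joinL botL topL M meetM joinM botM topM f \<longleftrightarrow>
     f ` L \<subseteq> M \<and> inj_on f L \<and>
     (\<forall>x\<in>L. \<forall>y\<in>L. f (meetL x y) = meetM (f x) (f y) \<and> f (joinL x y) = joinM (f x) (f y)) \<and>
     f botL = botM \<and> f topL = topM"

end

theory Submission
  imports Defs
begin

interpretation V: module "vscale :: 'f::field \<Rightarrow> ('a, 'f) vec \<Rightarrow> ('a, 'f) vec"
  by unfold_locales (auto simp: vscale_def fun_eq_iff algebra_simps)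

lemma Fmap_span: "Fmap (A, B, C) = vspan (xg ` A \<union> yg ` B \<union> zg ` C)"
  by (simp add: Fmap_def vspan_def ssum_def V.span_Un)

definition okc :: "'a set \<times> 'a set \<times> 'a set \<Rightarrow> ('a, 'f::field) vec \<Rightarrow> 'a \<Rightarrow> bool" where
  "okc t v \<alpha> = (case t of (A, B, C) \<Rightarrow> \<alpha> \<in> mu3 (A, B, C) \<or> (\<alpha> \<in> A \<and> v (\<alpha>, False) = 0)
     \<or> (\<alpha> \<in> B \<and> v (\<alpha>, True) = 0) \<or> (\<alpha> \<in> C \<and> v (\<alpha>, True) = v (\<alpha>, False))
     \<or> (v (\<alpha>, True) = 0 \<and> v (\<alpha>, False) = 0))"

definition Gs :: "'a set \<times> 'a set \<times> 'a set \<Rightarrow> ('a, 'f::field) vec set" where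
  "Gs t = {v. finite {i. v i \<noteq> 0} \<and> (\<forall>\<alpha>. okc t v \<alpha>)}"

lemma okc_add: "okc (A,B,C) u \<alpha> \<Longrightarrow> okc (A,B,C) w \<alpha> \<Longrightarrow> okc (A,B,C) (u + w) \<alpha>"
  by (auto simp: okc_def mu3_def)

lemma okc_scale: "okc (A,B,C) u \<alpha> \<Longrightarrow> okc (A,B,C) (vscale c u) \<alpha>"
  by (auto simp: okc_def mu3_def vscale_def)

lemma Gs_subspace: "V.subspace (Gs t :: ('a, 'b::field) vec set)"
proof -
  obtain A B C where t: "t = (A, B, C)" by (cases t) auto
  have fin: "finite {i. (u + w) i \<noteq> 0}" if "finite {i. u i \<noteq> 0}" "finite {i. w i \<noteq> 0}"
    for u w :: "('a, 'b) vec"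
    by (rule finite_subset[OF _ finite_UnI[OF that]]) auto
  have fin2: "finite {i. vscale c u i \<noteq> 0}" if "finite {i. u i \<noteq> 0}" for u :: "('a, 'b) vec" and c
    by (rule finite_subset[OF _ that]) (auto simp: vscale_def)
  have z: "okc (A,B,C) (0::('a, 'b) vec) \<alpha>" for \<alpha> by (simp add: okc_def)
  show ?thesis
    unfolding V.subspace_def Gs_def t
  proof (intro conjI ballI allI)
    show "(0::('a,'b) vec) \<in> {v. finite {i. v i \<noteq> 0} \<and> (\<forall>\<alpha>. okc (A, B, C) v \<alpha>)}" 
    proof -
      have "finite {i. (0::('a,'b) vec) i \<noteq> 0}" by simp
      then show ?thesis using z by blast
    qed
  next
    fix x y assume x: "x \<in> {v. finite {i. v i \<noteq> 0} \<and> (\<forall>\<alpha>. okc (A, B, C) (v::('a,'b) vec) \<alpha>)}"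
      and y: "y \<in> {v. finite {i. v i \<noteq> 0} \<and> (\<forall>\<alpha>. okc (A, B, C) (v::('a,'b) vec) \<alpha>)}"
    show "x + y \<in> {v. finite {i. v i \<noteq> 0} \<and> (\<forall>\<alpha>. okc (A, B, C) v \<alpha>)}"
      using x y fin[of x y] okc_add[of A B C x _ y] by (simp, blast)
  next
    fix c x assume x: "x \<in> {v. finite {i. v i \<noteq> 0} \<and> (\<forall>\<alpha>. okc (A, B, C) (v::('a,'b) vec) \<alpha>)}"
    show "vscale c x \<in> {v. finite {i. v i \<noteq> 0} \<and> (\<forall>\<alpha>. okc (A, B, C) v \<alpha>)}"
      using x fin2[of x c] okc_scale[of A B C x] by (simp, blast)
  qed
qed

lemma comp_eq: "(\<lambda>i. if fst i = \<alpha> then v i else 0) =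
   vscale (v (\<alpha>, True)) (xg \<alpha>) + vscale (v (\<alpha>, False)) (yg \<alpha>)"
  by (auto simp: fun_eq_iff vscale_def xg_def yg_def)

lemma Gs_sub_Fmap:
  assumes fin: "finite F"
  shows "\<forall>v. v \<in> Gs t \<longrightarrow> {\<alpha>. v (\<alpha>, True) \<noteq> 0 \<or> v (\<alpha>, False) \<noteq> 0} \<subseteq> F \<longrightarrow> v \<in> Fmap t"
  using fin
proof (induction F rule: finite_induct)
  case empty
  show ?case
  proof (intro allI impI)
    fix v :: "('a,'b) vec"
    assume "{\<alpha>. v (\<alpha>, True) \<noteq> 0 \<or> v (\<alpha>, False) \<noteq> 0} \<subseteq> {}"
    then have "v = 0" by (auto simp: fun_eq_iff) (metis (full_types) prod.collapse)
    then show "v \<in> Fmap t" by (cases t) (simp add: Fmap_span vspan_def V.span_zero)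
  qed
next
  case (insert \<alpha> F)
  obtain A B C where t: "t = (A, B, C)" by (cases t) auto
  let ?S = "xg ` A \<union> yg ` B \<union> zg ` C :: ('a, 'b) vec set"
  show ?case
  proof (intro allI impI)
    fix v :: "('a,'b) vec"
    assume v: "v \<in> Gs t" and sup: "{\<alpha>. v (\<alpha>, True) \<noteq> 0 \<or> v (\<alpha>, False) \<noteq> 0} \<subseteq> insert \<alpha> F"
    define r where "r = (\<lambda>i. if fst i = \<alpha> then 0 else v i)"
    define c where "c = (\<lambda>i. if fst i = \<alpha> then v i else (0::'b))"
    have vrc: "v = c + r" by (auto simp: fun_eq_iff r_def c_def)
    have "r \<in> Gs t"
    proof -
      have "finite {i. r i \<noteq> 0}"
        using v by (auto simp: Gs_def r_def intro: finite_subset)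
      moreover have "okc t r \<beta>" for \<beta>
        using v by (cases "\<beta> = \<alpha>") (auto simp: Gs_def r_def okc_def t)
      ultimately show ?thesis by (auto simp: Gs_def)
    qed
    moreover have "{\<beta>. r (\<beta>, True) \<noteq> 0 \<or> r (\<beta>, False) \<noteq> 0} \<subseteq> F"
      using sup by (auto simp: r_def)
    ultimately have rF: "r \<in> Fmap t" using insert.IH by blast
    have ok: "okc t v \<alpha>" using v by (simp add: Gs_def)
    have xs: "xg a \<in> V.span ?S" if "a \<in> A" for a using that by (intro V.span_base) auto
    have ys: "yg a \<in> V.span ?S" if "a \<in> B" for a using that by (intro V.span_base) auto
    have zs: "zg a \<in> V.span ?S" if "a \<in> C" for a using that by (intro V.span_base) auto
    have yxz: "yg a = - xg a - zg a" for a :: 'a by (simp add: zg_def)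
    have xyz: "xg a = - yg a - zg a" for a :: 'a by (simp add: zg_def)
    have zsc: "vscale p (xg a) + vscale p (yg a) = vscale (- p) (zg a)" for p and a :: 'a
      by (simp add: zg_def fun_eq_iff vscale_def algebra_simps)
    have cS: "c \<in> V.span ?S"
    proof -
      have ceq: "c = vscale (v (\<alpha>, True)) (xg \<alpha>) + vscale (v (\<alpha>, False)) (yg \<alpha>)"
        unfolding c_def by (rule comp_eq)
      have both: "c \<in> V.span ?S" if "xg \<alpha> \<in> V.span ?S" "yg \<alpha> \<in> V.span ?S"
        unfolding ceq using that by (meson V.span_add V.span_scale)
      show ?thesis
      proof -
        consider "\<alpha> \<in> A" "\<alpha> \<in> B" | "\<alpha> \<in> A" "\<alpha> \<in> C" | "\<alpha> \<in> B" "\<alpha> \<in> C"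
          | "\<alpha> \<in> A" "v (\<alpha>, False) = 0" | "\<alpha> \<in> B" "v (\<alpha>, True) = 0"
          | "\<alpha> \<in> C" "v (\<alpha>, True) = v (\<alpha>, False)" | "v (\<alpha>, True) = 0" "v (\<alpha>, False) = 0"
          using ok by (auto simp: okc_def t mu3_def)
        then show ?thesis
        proof cases
          case 1 then show ?thesis using both xs ys by blast
        next
          case 2
          then have a: "xg \<alpha> \<in> V.span ?S" "zg \<alpha> \<in> V.span ?S" using xs zs by auto
          then have "yg \<alpha> \<in> V.span ?S" using yxz V.span_diff V.span_neg by metis
          then show ?thesis using a both by blast
        next
          case 3
          then have a: "yg \<alpha> \<in> V.span ?S" "zg \<alpha> \<in> V.span ?S" using ys zs by auto
          then have "xg \<alpha> \<in> V.span ?S" using xyz V.span_diff V.span_neg by metis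
          then show ?thesis using a both by blast
        next
          case 4 then show ?thesis unfolding ceq
            by (simp add: V.span_scale xs)
        next
          case 5 then show ?thesis unfolding ceq
            by (simp add: V.span_scale ys)
        next
          case 6 then show ?thesis unfolding ceq
            by (simp add: zsc V.span_scale V.span_neg zs)
        next
          case 7 then show ?thesis unfolding ceq
            by (simp add: V.span_zero)
        qed
      qed
    qed
    show "v \<in> Fmap t"
      using cS rF by (simp add: vrc t Fmap_span vspan_def V.span_add)
  qed
qed

lemma Fmap_Gs: "Fmap t = Gs t"
proof
  obtain A B C where t: "t = (A, B, C)" by (cases t) auto
  have "xg ` A \<union> yg ` B \<union> zg ` C \<subseteq> Gs t"
  proof -
    have fx: "{i. xg a i \<noteq> (0::'b)} = {(a, True)}" for a :: 'a by (auto simp: xg_def)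
    have fy: "{i. yg a i \<noteq> (0::'b)} = {(a, False)}" for a :: 'a by (auto simp: yg_def)
    have fz: "{i. zg a i \<noteq> (0::'b)} \<subseteq> {(a, True), (a, False)}" for a :: 'a
      by (auto simp: zg_def xg_def yg_def)
    have fz': "finite {i. zg a i \<noteq> (0::'b)}" for a :: 'a by (rule finite_subset[OF fz]) simp
    have fz'': "finite {i. i \<noteq> (a, True) \<longrightarrow> i = (a, False)}" for a :: 'a
      by (rule finite_subset[of _ "{(a,True),(a,False)}"]) auto
    show ?thesis
      by (auto simp: Gs_def okc_def t fx fy fz' fz'' xg_def yg_def zg_def mu3_def split: if_splits)
  qed
  then show "Fmap t \<subseteq> Gs t"
    unfolding t Fmap_span vspan_def using Gs_subspace[of t] t by (metis V.span_minimal)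
next
  show "Gs t \<subseteq> Fmap t"
  proof
    fix v assume v: "v \<in> Gs t"
    have "finite (fst ` {i. v i \<noteq> 0})" using v by (simp add: Gs_def)
    moreover have "{\<alpha>. v (\<alpha>, True) \<noteq> 0 \<or> v (\<alpha>, False) \<noteq> 0} \<subseteq> fst ` {i. v i \<noteq> 0}"
      by force
    ultimately show "v \<in> Fmap t" using Gs_sub_Fmap v by blast
  qed
qed

lemma Gs_sub_Vsp: "A \<subseteq> K \<Longrightarrow> B \<subseteq> K \<Longrightarrow> C \<subseteq> K \<Longrightarrow> Gs (A, B, C) \<subseteq> Vsp K"
proof
  fix v assume s: "A \<subseteq> K" "B \<subseteq> K" "C \<subseteq> K" and v: "v \<in> Gs (A, B, C)"
  have "fst i \<in> K" if "v i \<noteq> 0" for i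
  proof -
    obtain a b where i: "i = (a, b)" by (cases i)
    have "okc (A, B, C) v a" using v by (simp add: Gs_def)
    then show ?thesis using that s i by (cases b) (auto simp: okc_def mu3_def)
  qed
  then show "v \<in> Vsp K" using v by (auto simp: Vsp_def Gs_def)
qed

lemma Fmap_SubV: "A \<subseteq> K \<Longrightarrow> B \<subseteq> K \<Longrightarrow> C \<subseteq> K \<Longrightarrow> Fmap (A, B, C) \<in> SubV K"
proof -
  assume s: "A \<subseteq> K" "B \<subseteq> K" "C \<subseteq> K"
  have "Fmap (A, B, C) \<subseteq> Vsp K" unfolding Fmap_Gs using s by (rule Gs_sub_Vsp)
  moreover have "V.subspace (Fmap (A, B, C))" by (simp add: Fmap_span vspan_def)
  ultimately show ?thesis by (simp add: SubV_def)
qed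

lemma mem_xg: "(xg a :: ('a, 'b::field) vec) \<in> Gs (A, B, C) \<longleftrightarrow> a \<in> mu3 (A, B, C) \<or> a \<in> A"
proof -
  have fx: "{i. (xg a :: ('a, 'b) vec) i \<noteq> 0} = {(a, True)}" by (auto simp: xg_def)
  show ?thesis by (auto simp: Gs_def okc_def fx xg_def)
qed

lemma mem_yg: "(yg a :: ('a, 'b::field) vec) \<in> Gs (A, B, C) \<longleftrightarrow> a \<in> mu3 (A, B, C) \<or> a \<in> B"
proof -
  have fx: "{i. (yg a :: ('a, 'b) vec) i \<noteq> 0} = {(a, False)}" by (auto simp: yg_def)
  show ?thesis by (auto simp: Gs_def okc_def fx yg_def)
qed

lemma mem_zg: "(zg a :: ('a, 'b::field) vec) \<in> Gs (A, B, C) \<longleftrightarrow> a \<in> mu3 (A, B, C) \<or> a \<in> C"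
proof -
  have fx: "{i. (zg a :: ('a, 'b) vec) i \<noteq> 0} = {(a, True), (a, False)}"
    by (auto simp: zg_def xg_def yg_def split: if_splits)
  have fz'': "finite {i. i \<noteq> (a, True) \<longrightarrow> i = (a, False)}"
    by (rule finite_subset[of _ "{(a,True),(a,False)}"]) auto
  show ?thesis by (auto simp: Gs_def okc_def fx fz'' zg_def xg_def yg_def)
qed

lemma balanced_mu3: "balanced (A, B, C) \<Longrightarrow> mu3 (A, B, C) = A \<inter> B \<inter> C"
  unfolding balanced_def mu3_def by blast

lemma Fmap_inj:
  assumes "balanced (A, B, C)" "balanced (A', B', C')"
    and eq: "(Fmap (A, B, C) :: ('a, 'b::field) vec set) = Fmap (A', B', C')"
  shows "(A, B, C) = (A', B', C')"
proof -
  have eq': "(Gs (A, B, C) :: ('a, 'b) vec set) = Gs (A', B', C')" using eq by (simp add: Fmap_Gs)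
  have m1: "mu3 (A, B, C) = A \<inter> B \<inter> C" and m2: "mu3 (A', B', C') = A' \<inter> B' \<inter> C'"
    using assms by (simp_all add: balanced_mu3)
  have "A = A'"
    using mem_xg[where 'b='b, of _ A B C] mem_xg[where 'b='b, of _ A' B' C'] eq' m1 m2 by blast
  moreover have "B = B'"
    using mem_yg[where 'b='b, of _ A B C] mem_yg[where 'b='b, of _ A' B' C'] eq' m1 m2 by blast
  moreover have "C = C'"
    using mem_zg[where 'b='b, of _ A B C] mem_zg[where 'b='b, of _ A' B' C'] eq' m1 m2 by blast
  ultimately show ?thesis by simp
qed

lemma bal_cases:
  assumes "balanced (A, B, C)"
    and "x \<in> A \<Longrightarrow> x \<in> B \<Longrightarrow> x \<in> C \<Longrightarrow> P"
    and "x \<in> A \<Longrightarrow> x \<notin> B \<Longrightarrow> x \<notin> C \<Longrightarrow> P"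
    and "x \<notin> A \<Longrightarrow> x \<in> B \<Longrightarrow> x \<notin> C \<Longrightarrow> P"
    and "x \<notin> A \<Longrightarrow> x \<notin> B \<Longrightarrow> x \<in> C \<Longrightarrow> P"
    and "x \<notin> A \<Longrightarrow> x \<notin> B \<Longrightarrow> x \<notin> C \<Longrightarrow> P"
  shows P
  using assms unfolding balanced_def by blast

lemma Fmap_meet:
  assumes b1: "balanced (A, B, C)" and b2: "balanced (A', B', C')"
  shows "(Fmap (m3meet (A, B, C) (A', B', C')) :: ('a, 'b::field) vec set)
         = Fmap (A, B, C) \<inter> Fmap (A', B', C')"
proof -
  have "okc (A \<inter> A', B \<inter> B', C \<inter> C') v x \<longleftrightarrow> okc (A, B, C) v x \<and> okc (A', B', C') v x"
    for v :: "('a, 'b) vec" and x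
  proof -
    have b3: "balanced (A \<inter> A', B \<inter> B', C \<inter> C')" using b1 b2 unfolding balanced_def by blast
    show ?thesis
      by (rule bal_cases[OF b1, of x]; rule bal_cases[OF b2, of x]) (auto simp: okc_def mu3_def)
  qed
  then show ?thesis by (auto simp: Fmap_Gs Gs_def m3meet_def)
qed

lemma Fmap_bclosure: "(Fmap (bclosure u) :: ('a, 'b::field) vec set) = Fmap u"
proof -
  obtain A B C where u: "u = (A, B, C)" by (cases u) auto
  have "okc (bclosure (A, B, C)) v x \<longleftrightarrow> okc (A, B, C) v x" for v :: "('a, 'b) vec" and x
    unfolding okc_def bclosure_def mu3_def by auto
  then show ?thesis by (simp add: Fmap_Gs Gs_def u)
qed

lemma Fmap_join:
  "(Fmap (m3join (A, B, C) (A', B', C')) :: ('a, 'b::field) vec set)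
     = ssum (Fmap (A, B, C)) (Fmap (A', B', C'))"
proof -
  have "(Fmap (m3join (A, B, C) (A', B', C')) :: ('a, 'b) vec set) = Fmap (A \<union> A', B \<union> B', C \<union> C')"
    by (simp add: m3join_def Fmap_bclosure)
  also have "\<dots> = vspan ((xg ` A \<union> yg ` B \<union> zg ` C) \<union> (xg ` A' \<union> yg ` B' \<union> zg ` C'))"
    unfolding Fmap_span by (rule arg_cong[where f=vspan]) auto
  also have "\<dots> = ssum (Fmap (A, B, C)) (Fmap (A', B', C'))"
    unfolding Fmap_span vspan_def ssum_def V.span_Un[symmetric] ..
  finally show ?thesis .
qed

lemma Fmap_bot: "(Fmap ({}, {}, {}) :: ('a, 'b::field) vec set) = {0}"
  by (simp add: Fmap_span vspan_def)

lemma Fmap_top: "(Fmap (K, K, K) :: ('a, 'b::field) vec set) = Vsp K"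
proof
  show "(Fmap (K, K, K) :: ('a, 'b) vec set) \<subseteq> Vsp K" unfolding Fmap_Gs by (rule Gs_sub_Vsp) auto
next
  show "Vsp K \<subseteq> (Fmap (K, K, K) :: ('a, 'b) vec set)"
  proof
    fix v :: "('a, 'b) vec" assume v: "v \<in> Vsp K"
    have "okc (K, K, K) v x" for x
    proof (cases "x \<in> K")
      case True then show ?thesis by (simp add: okc_def mu3_def)
    next
      case False
      then have "v (x, True) = 0" "v (x, False) = 0" using v by (auto simp: Vsp_def)
      then show ?thesis by (simp add: okc_def)
    qed
    then have "\<forall>x. okc (K, K, K) v x" by blast
    then show "v \<in> Fmap (K, K, K)" using v by (simp add: Fmap_Gs Gs_def Vsp_def)
  qed
qed

lemma main_M3P:
  "bounded_lattice_embedding (M3P K) m3meet m3join ({}, {}, {}) (K, K, K)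
     (SubV K) (\<inter>) ssum {0} (Vsp K) (Fmap :: _ \<Rightarrow> ('a, 'f::field) vec set)"
  unfolding bounded_lattice_embedding_def
proof (intro conjI)
  show "(Fmap :: _ \<Rightarrow> ('a, 'f) vec set) ` M3P K \<subseteq> SubV K"
    unfolding M3P_def using Fmap_SubV by blast
  show "inj_on (Fmap :: _ \<Rightarrow> ('a, 'f) vec set) (M3P K)"
  proof (rule inj_onI)
    fix x y assume "x \<in> M3P K" "y \<in> M3P K" and e: "(Fmap x :: ('a, 'f) vec set) = Fmap y"
    then obtain A B C A' B' C' where "x = (A, B, C)" "y = (A', B', C')"
      "balanced (A, B, C)" "balanced (A', B', C')" unfolding M3P_def by blast
    then show "x = y" using e Fmap_inj by metis
  qed
  show "\<forall>x\<in>M3P K. \<forall>y\<in>M3P K. (Fmap (m3meet x y) :: ('a, 'f) vec set) = Fmap x \<inter> Fmap y \<and>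
          (Fmap (m3join x y) :: ('a, 'f) vec set) = ssum (Fmap x) (Fmap y)"
  proof (intro ballI)
    fix x y assume "x \<in> M3P K" "y \<in> M3P K"
    then obtain A B C A' B' C' where "x = (A, B, C)" "y = (A', B', C')"
      "balanced (A, B, C)" "balanced (A', B', C')" unfolding M3P_def by blast
    then show "(Fmap (m3meet x y) :: ('a, 'f) vec set) = Fmap x \<inter> Fmap y \<and>
          (Fmap (m3join x y) :: ('a, 'f) vec set) = ssum (Fmap x) (Fmap y)"
      using Fmap_meet Fmap_join by metis
  qed
  show "(Fmap ({}, {}, {}) :: ('a, 'f) vec set) = {0}" by (rule Fmap_bot)
  show "(Fmap (K, K, K) :: ('a, 'f) vec set) = Vsp K" by (rule Fmap_top)
qed

lemma ble_restrict:
  assumes "bounded_lattice_embedding L meetL joinL botL topL M meetM joinM botM topM f" "L' \<subseteq> L"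
  shows "bounded_lattice_embedding L' meetL joinL botL topL M meetM joinM botM topM f"
  using assms unfolding bounded_lattice_embedding_def by (auto intro: inj_on_subset)

lemma Sset_sub: "Sset K \<subseteq> M3P K"
  by (auto simp: Sset_def M3F_def M3P_def FinCof_def)

theorem theorem6p4:
  fixes K :: "'a set"
  shows "bounded_lattice_embedding (M3P K) m3meet m3join ({}, {}, {}) (K, K, K)
           (SubV K) (\<inter>) ssum {0} (Vsp K) (Fmap :: _ \<Rightarrow> ('a, 'f::field) vec set)
       \<and> (infinite K \<longrightarrow>
           bounded_lattice_embedding (Sset K) m3meet m3join ({}, {}, {}) (K, K, K)
             (SubV K) (\<inter>) ssum {0} (Vsp K) (Fmap :: _ \<Rightarrow> ('a, 'f::field) vec set))"
  using main_M3P ble_restrict[OF main_M3P Sset_sub] by blast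

end
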